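(* Let $X$ be a shift space over $\mathcal{A}$, let $\sigma:\mathcal{A}^*\to\mathcal{B}^*$ be an injective and strongly left proper morphism with first letter $\ell$, let $Y$ be the image of $X$ under $\sigma$ and let $u$ be a non-empty word in $\mathcal{L}(Y)$. If $\ell$ does not occur in $u$, then there exists $b\in\mathcal{A}$ such that $u$ is a non-prefix factor of $\sigma(b)$. Otherwise, there is a unique triple $(s,v,p)\in\mathcal{B}^*\times\mathcal{L}(X)\times\mathcal{B}^*$ for which there exists a pair $(a,b)\in E_X(v)$ such that $u=s\sigma(v)p$, $s$ is a proper suffix of $\sigma(a)$ and $p$ is a non-empty prefix of $\sigma(b)$. Moreover, in the case where $\ell$ occurs in $u$, $$E_Y(u)=\{(a',b')\in\mathcal{B}\times\mathcal{B}\mid \exists (a,b)\in E_X(v):\ \sigma(a)\in\mathcal{B}^*a's\ \wedge\ \sigma(b)\ell\in pb'\mathcal{B}^*\}.$$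
   Context: A shift space over a finite alphabet $\mathcal{A}$ is a closed shift-invariant $X\subseteq\mathcal{A}^{\mathbb{Z}}$ in which all letters of $\mathcal{A}$ occur; $\mathcal{L}(X)$ is its set of finite factors (including the empty word). For $w\in\mathcal{L}(X)$, $E_X(w)=\{(a,b)\in\mathcal{A}\times\mathcal{A}: awb\in\mathcal{L}(X)\}$. A morphism $\sigma:\mathcal{A}^*\to\mathcal{B}^*$ is a non-erasing monoid morphism; it is strongly left proper with first letter $\ell\in\mathcal{B}$ if for every $a\in\mathcal{A}$, $\sigma(a)$ starts with $\ell$ and $\ell$ occurs exactly once in $\sigma(a)$. The image of $X$ under $\sigma$ is $Y=\{S^k\sigma(x): x\in X, 0\le k<|\sigma(x_0)|\}$ where $S$ is the shift map and $\sigma$ is extended to bi-infinite words by concatenation (with $\sigma(x_0)$ starting at index $0$). *)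

theory Defs
  imports Main "HOL-Library.Sublist"
begin

definition shift :: "(int \<Rightarrow> 'a) \<Rightarrow> (int \<Rightarrow> 'a)" where
  "shift x = (\<lambda>i. x (i + 1))"

text \<open>Closedness in the product of discrete topologies: every point all of whose
  central windows agree with some point of X belongs to X.\<close>
definition closed_shift :: "(int \<Rightarrow> 'a) set \<Rightarrow> bool" where
  "closed_shift X \<longleftrightarrow>
     (\<forall>x. (\<forall>n::nat. \<exists>y\<in>X. \<forall>i. \<bar>i\<bar> \<le> int n \<longrightarrow> y i = x i) \<longrightarrow> x \<in> X)"

definition shift_space :: "(int \<Rightarrow> 'a::finite) set \<Rightarrow> bool" where
  "shift_space X \<longleftrightarrow> closed_shift X \<and> shift ` X = X \<and>
     (\<forall>a. \<exists>x\<in>X. \<exists>i. x i = a)"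

definition factor_at :: "(int \<Rightarrow> 'a) \<Rightarrow> int \<Rightarrow> nat \<Rightarrow> 'a list" where
  "factor_at x i n = map (\<lambda>k. x (i + int k)) [0..<n]"

definition lang :: "(int \<Rightarrow> 'a) set \<Rightarrow> 'a list set" where
  "lang X = {w. \<exists>x\<in>X. \<exists>i. w = factor_at x i (length w)}"

definition ext_set :: "(int \<Rightarrow> 'a) set \<Rightarrow> 'a list \<Rightarrow> ('a \<times> 'a) set" where
  "ext_set X w = {(a, b). a # w @ [b] \<in> lang X}"

definition morph :: "('a \<Rightarrow> 'b list) \<Rightarrow> 'a list \<Rightarrow> 'b list" where
  "morph \<sigma> w = concat (map \<sigma> w)"

definition non_erasing :: "('a \<Rightarrow> 'b list) \<Rightarrow> bool" where
  "non_erasing \<sigma> \<longleftrightarrow> (\<forall>a. \<sigma> a \<noteq> [])"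

definition injective_morphism :: "('a \<Rightarrow> 'b list) \<Rightarrow> bool" where
  "injective_morphism \<sigma> \<longleftrightarrow> inj (morph \<sigma>)"

definition strongly_left_proper :: "('a \<Rightarrow> 'b list) \<Rightarrow> 'b \<Rightarrow> bool" where
  "strongly_left_proper \<sigma> l \<longleftrightarrow>
     (\<forall>a. \<sigma> a \<noteq> [] \<and> hd (\<sigma> a) = l \<and> count_list (\<sigma> a) l = 1)"

text \<open>Starting position of sigma(x_n) in sigma(x), with sigma(x_0) starting at 0.\<close>
definition start_pos :: "('a \<Rightarrow> 'b list) \<Rightarrow> (int \<Rightarrow> 'a) \<Rightarrow> int \<Rightarrow> int" where
  "start_pos \<sigma> x n =
     (if 0 \<le> n then (\<Sum>k\<in>{0..<n}. int (length (\<sigma> (x k))))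
      else - (\<Sum>k\<in>{n..<0}. int (length (\<sigma> (x k)))))"

definition is_bi_image :: "('a \<Rightarrow> 'b list) \<Rightarrow> (int \<Rightarrow> 'a) \<Rightarrow> (int \<Rightarrow> 'b) \<Rightarrow> bool" where
  "is_bi_image \<sigma> x y \<longleftrightarrow>
     (\<forall>n. \<forall>k < length (\<sigma> (x n)). y (start_pos \<sigma> x n + int k) = \<sigma> (x n) ! k)"

definition image_shift :: "('a \<Rightarrow> 'b list) \<Rightarrow> (int \<Rightarrow> 'a) set \<Rightarrow> (int \<Rightarrow> 'b) set" where
  "image_shift \<sigma> X = {(shift ^^ k) y | x y k. x \<in> X \<and> is_bi_image \<sigma> x y \<and>
                          k < length (\<sigma> (x 0))}"

end

theory Submission
  imports Defs
begin


lemma sp_zero: "start_pos \<sigma> x 0 = 0"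
  by (simp add: start_pos_def)

lemma sp_succ: "start_pos \<sigma> x (n+1) = start_pos \<sigma> x n + int (length (\<sigma> (x n)))"
proof (cases "0 \<le> n")
  case True
  have "{0..<n+1} = insert n {0..<n}" using True by auto
  then show ?thesis using True by (simp add: start_pos_def)
next
  case False
  show ?thesis
  proof (cases "n = -1")
    case True
    have "{-1..<0::int} = {-1}" by auto
    then show ?thesis using True by (simp add: start_pos_def)
  next
    case F2: False
    have "{n..<0} = insert n {n+1..<0}" using False by auto
    then show ?thesis using False F2 by (simp add: start_pos_def)
  qed
qed

lemma sp_mono_step:
  assumes ne: "\<forall>a. \<sigma> a \<noteq> []"
  shows "start_pos \<sigma> x n < start_pos \<sigma> x (n+1)"
  using ne[rule_format, of "x n"] by (simp add: sp_succ)

lemma sp_less: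
  assumes ne: "\<forall>a. \<sigma> a \<noteq> []" and "n < m"
  shows "start_pos \<sigma> x n < start_pos \<sigma> x m"
proof -
  have "\<And>k::nat. start_pos \<sigma> x n < start_pos \<sigma> x (n + 1 + int k)"
  proof -
    fix k :: nat show "start_pos \<sigma> x n < start_pos \<sigma> x (n + 1 + int k)"
    proof (induction k)
      case 0 then show ?case using sp_mono_step[OF ne] by simp
    next
      case (Suc k)
      then show ?case using sp_mono_step[OF ne, of x "n + 1 + int k"]
        by (simp add: add.assoc)
    qed
  qed
  from this[of "nat (m - n - 1)"] assms(2) show ?thesis by simp
qed

lemma sp_less_iff:
  assumes ne: "\<forall>a. \<sigma> a \<noteq> []"
  shows "start_pos \<sigma> x n < start_pos \<sigma> x m \<longleftrightarrow> n < m"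
proof
  assume h: "start_pos \<sigma> x n < start_pos \<sigma> x m"
  show "n < m"
  proof (rule ccontr)
    assume "\<not> n < m"
    then have "m = n \<or> m < n" by linarith
    then show False using h sp_less[OF ne, of m n x] by auto
  qed
qed (rule sp_less[OF ne])

lemma sp_le_iff:
  assumes ne: "\<forall>a. \<sigma> a \<noteq> []"
  shows "start_pos \<sigma> x n \<le> start_pos \<sigma> x m \<longleftrightarrow> n \<le> m"
  using sp_less_iff[OF ne, of x m n] by linarith

lemma sp_block_ex:
  assumes ne: "\<forall>a. \<sigma> a \<noteq> []"
  shows "\<exists>n. start_pos \<sigma> x n \<le> t \<and> t < start_pos \<sigma> x (n+1)"
proof (induction t rule: int_induct[where k=0])
  case base
  show ?case using sp_mono_step[OF ne, of x 0] by (intro exI[of _ 0]) (simp add: sp_zero)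
next
  case (step1 t)
  then obtain n where n: "start_pos \<sigma> x n \<le> t" "t < start_pos \<sigma> x (n+1)" by blast
  show ?case
  proof (cases "t + 1 < start_pos \<sigma> x (n+1)")
    case True then show ?thesis using n by (intro exI[of _ n]) simp
  next
    case False then show ?thesis using n sp_mono_step[OF ne, of x "n+1"]
      by (intro exI[of _ "n+1"]) simp
  qed
next
  case (step2 t)
  then obtain n where n: "start_pos \<sigma> x n \<le> t" "t < start_pos \<sigma> x (n+1)" by blast
  show ?case
  proof (cases "start_pos \<sigma> x n \<le> t - 1")
    case True then show ?thesis using n by (intro exI[of _ n]) simp
  next
    case False then show ?thesis using n sp_mono_step[OF ne, of x "n-1"]
      by (intro exI[of _ "n-1"]) simp
  qed
qed

lemma sp_block_unique:
  assumes ne: "\<forall>a. \<sigma> a \<noteq> []"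
    and "start_pos \<sigma> x n \<le> t" "t < start_pos \<sigma> x (n+1)"
    and "start_pos \<sigma> x n' \<le> t" "t < start_pos \<sigma> x (n'+1)"
  shows "n = n'"
proof -
  have "n < n' + 1" using assms sp_less_iff[OF ne, of x n "n'+1"] by linarith
  moreover have "n' < n + 1" using assms sp_less_iff[OF ne, of x n' "n+1"] by linarith
  ultimately show ?thesis by linarith
qed

lemma bi_image_at:
  assumes "is_bi_image \<sigma> x y"
    and "start_pos \<sigma> x n \<le> t" "t < start_pos \<sigma> x (n+1)"
  shows "y t = \<sigma> (x n) ! nat (t - start_pos \<sigma> x n)"
proof -
  have "nat (t - start_pos \<sigma> x n) < length (\<sigma> (x n))" using assms(2,3) by (simp add: sp_succ)
  moreover have "t = start_pos \<sigma> x n + int (nat (t - start_pos \<sigma> x n))" using assms(2) by simp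
  ultimately show ?thesis using assms(1) unfolding is_bi_image_def by metis
qed

lemma bi_image_exists:
  assumes ne: "\<forall>a. \<sigma> a \<noteq> []"
  shows "\<exists>y. is_bi_image \<sigma> x y"
proof -
  define blk where "blk t = (THE n. start_pos \<sigma> x n \<le> t \<and> t < start_pos \<sigma> x (n+1))" for t
  have blk: "start_pos \<sigma> x n \<le> t \<Longrightarrow> t < start_pos \<sigma> x (n+1) \<Longrightarrow> blk t = n" for n t
    unfolding blk_def by (rule the_equality) (auto intro: sp_block_unique[OF ne])
  define y where "y t = \<sigma> (x (blk t)) ! nat (t - start_pos \<sigma> x (blk t))" for t
  have "is_bi_image \<sigma> x y"
    unfolding is_bi_image_def
  proof (intro allI impI)
    fix n k assume k: "k < length (\<sigma> (x n))"
    have "blk (start_pos \<sigma> x n + int k) = n" using k by (intro blk) (auto simp: sp_succ)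
    then show "y (start_pos \<sigma> x n + int k) = \<sigma> (x n) ! k" by (simp add: y_def)
  qed
  then show ?thesis by blast
qed



lemma factor_len[simp]: "length (factor_at y i n) = n"
  by (simp add: factor_at_def)

lemma factor_nth[simp]: "k < n \<Longrightarrow> factor_at y i n ! k = y (i + int k)"
  by (simp add: factor_at_def)

lemma factor_append: "factor_at y i (m + n) = factor_at y i m @ factor_at y (i + int m) n"
  by (rule nth_equalityI) (auto simp: nth_append add.assoc)

lemma factor_zero[simp]: "factor_at y i 0 = []"
  by (simp add: factor_at_def)

lemma factor_one[simp]: "factor_at y i (Suc 0) = [y i]"
  by (simp add: factor_at_def)

lemma factor_sub:
  assumes "factor_at y i n = xs @ ys @ zs"
  shows "factor_at y (i + int (length xs)) (length ys) = ys"
proof (rule nth_equalityI)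
  fix k assume k: "k < length (factor_at y (i + int (length xs)) (length ys))"
  have "(xs @ ys @ zs) ! (length xs + k) = ys ! k" using k by (simp add: nth_append)
  moreover have "length xs + k < n" using k arg_cong[OF assms, of length] by simp
  ultimately show "factor_at y (i + int (length xs)) (length ys) ! k = ys ! k"
    using k assms[symmetric] by (simp add: add.assoc)
qed simp

lemma shift_pow: "(shift ^^ k) y = (\<lambda>t. y (t + int k))"
  by (induction k) (auto simp: shift_def add.commute add.left_commute)

lemma factor_shift_pow: "factor_at ((shift ^^ k) y) i n = factor_at y (i + int k) n"
  by (simp add: shift_pow factor_at_def add.commute add.left_commute)

lemma factor_block:
  assumes "is_bi_image \<sigma> x y"
  shows "factor_at y (start_pos \<sigma> x n) (length (\<sigma> (x n))) = \<sigma> (x n)"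
  using assms by (intro nth_equalityI) (auto simp: is_bi_image_def)

lemma factor_morph:
  assumes "is_bi_image \<sigma> x y"
  shows "factor_at y (start_pos \<sigma> x n) (nat (start_pos \<sigma> x (n + int k) - start_pos \<sigma> x n))
         = morph \<sigma> (factor_at x n k)"
proof (induction k)
  case 0 then show ?case by (simp add: morph_def)
next
  case (Suc k)
  have sp: "start_pos \<sigma> x (n + int (Suc k)) = start_pos \<sigma> x (n + int k) + int (length (\<sigma> (x (n + int k))))"
  proof -
    have "n + int (Suc k) = (n + int k) + 1" by simp
    then show ?thesis by (simp only: sp_succ)
  qed
  have le: "start_pos \<sigma> x n \<le> start_pos \<sigma> x (n + int k)"
  proof -
    have "\<And>j. start_pos \<sigma> x n \<le> start_pos \<sigma> x (n + int j)"
    proof -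
      fix j show "start_pos \<sigma> x n \<le> start_pos \<sigma> x (n + int j)"
      proof (induction j)
        case (Suc j)
        have "n + int (Suc j) = (n + int j) + 1" by simp
        then have "start_pos \<sigma> x (n + int (Suc j)) = start_pos \<sigma> x (n + int j) + int (length (\<sigma> (x (n + int j))))"
          by (simp only: sp_succ)
        then show ?case using Suc by linarith
      qed simp
    qed
    then show ?thesis .
  qed
  have eq: "nat (start_pos \<sigma> x (n + int (Suc k)) - start_pos \<sigma> x n)
      = nat (start_pos \<sigma> x (n + int k) - start_pos \<sigma> x n) + length (\<sigma> (x (n + int k)))"
    using sp le by simp
  have "factor_at x n (Suc k) = factor_at x n k @ [x (n + int k)]"
    using factor_append[of x n k 1] by simp
  then have "morph \<sigma> (factor_at x n (Suc k)) = morph \<sigma> (factor_at x n k) @ \<sigma> (x (n + int k))"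
    by (simp add: morph_def)
  moreover have "start_pos \<sigma> x n + int (nat (start_pos \<sigma> x (n + int k) - start_pos \<sigma> x n)) = start_pos \<sigma> x (n + int k)"
    using le by simp
  ultimately show ?case
    using Suc eq factor_append[of y "start_pos \<sigma> x n" "nat (start_pos \<sigma> x (n + int k) - start_pos \<sigma> x n)"]
      factor_block[OF assms, of "n + int k"] by simp
qed



lemma nth_not_l:
  assumes "xs \<noteq> []" "hd xs = l" "count_list xs l = 1" "0 < k" "k < length xs"
  shows "xs ! k \<noteq> l"
proof -
  obtain r where xs: "xs = l # r" using assms(1,2) by (cases xs) auto
  then have "l \<notin> set r" using assms(3) by (simp add: count_list_0_iff[symmetric])
  moreover have "xs ! k = r ! (k - 1)" "k - 1 < length r" using xs assms(4,5) by auto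
  ultimately show ?thesis by auto
qed

lemma bi_image_l:
  assumes ne: "\<forall>a. \<sigma> a \<noteq> []" and slp: "strongly_left_proper \<sigma> l"
    and bi: "is_bi_image \<sigma> x y"
  shows "y t = l \<longleftrightarrow> (\<exists>n. t = start_pos \<sigma> x n)"
proof
  assume yt: "y t = l"
  obtain n where n: "start_pos \<sigma> x n \<le> t" "t < start_pos \<sigma> x (n+1)"
    using sp_block_ex[OF ne] by blast
  have v: "y t = \<sigma> (x n) ! nat (t - start_pos \<sigma> x n)" by (rule bi_image_at[OF bi n])
  have lt: "nat (t - start_pos \<sigma> x n) < length (\<sigma> (x n))" using n by (simp add: sp_succ)
  show "\<exists>n. t = start_pos \<sigma> x n"
  proof (cases "t = start_pos \<sigma> x n")
    case False
    then have "0 < nat (t - start_pos \<sigma> x n)" using n by simp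
    then have "y t \<noteq> l" using v lt slp nth_not_l[of "\<sigma> (x n)" l] unfolding strongly_left_proper_def
      by auto
    then show ?thesis using yt by simp
  qed blast
next
  assume "\<exists>n. t = start_pos \<sigma> x n"
  then obtain n where t: "t = start_pos \<sigma> x n" by blast
  have ne': "\<sigma> (x n) \<noteq> []" using ne by simp
  have "y t = \<sigma> (x n) ! 0" using bi ne' t unfolding is_bi_image_def
    by (metis add_0_right length_greater_0_conv of_nat_0)
  also have "\<dots> = l" using slp ne' unfolding strongly_left_proper_def by (metis hd_conv_nth)
  finally show "y t = l" .
qed

lemma dec:
  assumes ne: "\<forall>a. \<sigma> a \<noteq> []" and slp: "strongly_left_proper \<sigma> l"
    and bi: "is_bi_image \<sigma> x y" and u: "u = factor_at y i L" and lu: "l \<in> set u"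
  shows "\<exists>j m. j \<le> m \<and> start_pos \<sigma> x (j-1) < i \<and> i \<le> start_pos \<sigma> x j
     \<and> start_pos \<sigma> x m < i + int L \<and> i + int L \<le> start_pos \<sigma> x (m+1) \<and>
     u = factor_at y i (nat (start_pos \<sigma> x j - i)) @ morph \<sigma> (factor_at x j (nat (m-j)))
         @ factor_at y (start_pos \<sigma> x m) (nat (i + int L - start_pos \<sigma> x m)) \<and>
     \<sigma> (x (j-1)) = factor_at y (start_pos \<sigma> x (j-1)) (nat (i - start_pos \<sigma> x (j-1)))
                   @ factor_at y i (nat (start_pos \<sigma> x j - i)) \<and>
     \<sigma> (x m) = factor_at y (start_pos \<sigma> x m) (nat (i + int L - start_pos \<sigma> x m))
                   @ factor_at y (i + int L) (nat (start_pos \<sigma> x (m+1) - (i + int L)))"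
proof -
  define sp where "sp = start_pos \<sigma> x"
  obtain k where k: "k < L" "y (i + int k) = l" using lu u
    by (auto simp: in_set_conv_nth)
  obtain n0 where n0: "i + int k = sp n0" using bi_image_l[OF ne slp bi] k(2) sp_def by blast
  obtain j0 where j0: "sp j0 \<le> i" "i < sp (j0+1)" using sp_block_ex[OF ne] sp_def by blast
  define j where "j = (if sp j0 = i then j0 else j0 + 1)"
  have j1: "sp (j-1) < i" "i \<le> sp j"
    using j0 sp_mono_step[OF ne, of x "j0 - 1"] unfolding j_def sp_def by auto
  obtain m where m: "sp m \<le> i + int L - 1" "i + int L - 1 < sp (m+1)"
    using sp_block_ex[OF ne] sp_def by blast
  have m1: "sp m < i + int L" "i + int L \<le> sp (m+1)" using m by auto
  have "j - 1 < n0" using j1 n0 sp_less_iff[OF ne, of x "j-1" n0] sp_def by simp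
  moreover have "n0 < m + 1" using m n0 k(1) sp_less_iff[OF ne, of x n0 "m+1"] sp_def by simp
  ultimately have jm: "j \<le> m" by simp
  have le_jm: "sp j \<le> sp m" using jm sp_le_iff[OF ne] sp_def by simp
  have Lsplit: "L = nat (sp j - i) + nat (sp m - sp j) + nat (i + int L - sp m)"
    using j1 le_jm m1 by linarith
  have mm: "sp (j + int (nat (m - j))) = sp m" using jm by simp
  have u_split: "u = factor_at y i (nat (sp j - i)) @ morph \<sigma> (factor_at x j (nat (m-j)))
         @ factor_at y (sp m) (nat (i + int L - sp m))"
  proof -
    have "u = factor_at y i (nat (sp j - i) + nat (sp m - sp j) + nat (i + int L - sp m))"
      using u Lsplit by simp
    also have "\<dots> = factor_at y i (nat (sp j - i)) @ factor_at y (sp j) (nat (sp m - sp j))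
         @ factor_at y (sp m) (nat (i + int L - sp m))"
      using j1 le_jm by (simp add: factor_append)
    also have "factor_at y (sp j) (nat (sp m - sp j)) = morph \<sigma> (factor_at x j (nat (m-j)))"
      using factor_morph[OF bi, of j "nat (m - j)"] mm sp_def by simp
    finally show ?thesis .
  qed
  have blk_a: "\<sigma> (x (j-1)) = factor_at y (sp (j-1)) (nat (i - sp (j-1)))
                   @ factor_at y i (nat (sp j - i))"
  proof -
    have "sp j = sp (j - 1) + int (length (\<sigma> (x (j-1))))"
      using sp_succ[of \<sigma> x "j-1"] sp_def by simp
    then have "length (\<sigma> (x (j-1))) = nat (i - sp (j-1)) + nat (sp j - i)" using j1 by linarith
    then have "\<sigma> (x (j-1)) = factor_at y (sp (j-1)) (nat (i - sp (j-1)) + nat (sp j - i))"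
      using factor_block[OF bi, of "j-1"] sp_def by simp
    then show ?thesis using j1 by (simp add: factor_append)
  qed
  have blk_b: "\<sigma> (x m) = factor_at y (sp m) (nat (i + int L - sp m))
                   @ factor_at y (i + int L) (nat (sp (m+1) - (i + int L)))"
  proof -
    have "sp (m+1) = sp m + int (length (\<sigma> (x m)))"
      using sp_succ[of \<sigma> x m] sp_def by simp
    then have "length (\<sigma> (x m)) = nat (i + int L - sp m) + nat (sp (m+1) - (i + int L))" using m1 by linarith
    then have "\<sigma> (x m) = factor_at y (sp m) (nat (i + int L - sp m) + nat (sp (m+1) - (i + int L)))"
      using factor_block[OF bi, of m] sp_def by simp
    then show ?thesis using m1 by (simp add: factor_append)
  qed
  show ?thesis
    using jm j1 m1 u_split blk_a blk_b unfolding sp_def by blast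
qed



lemma slp_form:
  assumes slp: "strongly_left_proper \<sigma> l"
  shows "\<exists>r. \<sigma> a = l # r \<and> l \<notin> set r"
proof -
  have "\<sigma> a \<noteq> []" "hd (\<sigma> a) = l" "count_list (\<sigma> a) l = 1"
    using slp unfolding strongly_left_proper_def by auto
  then show ?thesis by (cases "\<sigma> a") (auto simp: count_list_0_iff[symmetric])
qed

lemma strict_suffix_no_l:
  assumes slp: "strongly_left_proper \<sigma> l" and "strict_suffix s (\<sigma> a)"
  shows "l \<notin> set s"
proof -
  obtain r where r: "\<sigma> a = l # r" "l \<notin> set r" using slp_form[OF slp] by blast
  obtain w where w: "\<sigma> a = w @ s" "w \<noteq> []" using assms(2)
    unfolding strict_suffix_def suffix_def by auto
  then have "suffix s r" using r(1) by (cases w) (auto simp: suffix_def)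
  then show ?thesis using r(2) by (auto simp: suffix_def)
qed

lemma prefix_l:
  assumes slp: "strongly_left_proper \<sigma> l" and "p \<noteq> []" "prefix p (\<sigma> b)"
  shows "\<exists>q. p = l # q \<and> l \<notin> set q"
proof -
  obtain r where r: "\<sigma> b = l # r" "l \<notin> set r" using slp_form[OF slp] by blast
  then show ?thesis using assms(2,3) by (cases p) (auto simp: prefix_def)
qed

lemma morph_p_start:
  assumes slp: "strongly_left_proper \<sigma> l" and "p \<noteq> []" "prefix p (\<sigma> b)"
  shows "\<exists>r. morph \<sigma> v @ p = l # r"
proof (cases v)
  case Nil then show ?thesis using prefix_l[OF assms] by (auto simp: morph_def)
next
  case (Cons c v')
  obtain r where r: "\<sigma> c = l # r" using slp_form[OF slp] by blast
  then show ?thesis using Cons by (simp add: morph_def)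
qed

lemma tw_lemma: "l \<notin> set s \<Longrightarrow> takeWhile (\<lambda>c. c \<noteq> l) (s @ l # r) = s"
  by (induction s) auto

lemma decomp_unique:
  assumes slp: "strongly_left_proper \<sigma> l" and inj: "injective_morphism \<sigma>"
    and u1: "u = s @ morph \<sigma> v @ p" "strict_suffix s (\<sigma> a)" "p \<noteq> []" "prefix p (\<sigma> b)"
    and u2: "u = s' @ morph \<sigma> v' @ p'" "strict_suffix s' (\<sigma> a')" "p' \<noteq> []" "prefix p' (\<sigma> b')"
  shows "s' = s \<and> v' = v \<and> p' = p"
proof -
  have tw: "s = takeWhile (\<lambda>c. c \<noteq> l) u"
    if h: "u = s @ morph \<sigma> v @ p" "strict_suffix s (\<sigma> a)" "p \<noteq> []" "prefix p (\<sigma> b)" for s v p a b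
  proof -
    obtain r where "morph \<sigma> v @ p = l # r" using morph_p_start[OF slp h(3,4)] by blast
    moreover have "l \<notin> set s" using strict_suffix_no_l[OF slp h(2)] .
    moreover have "\<And>r. l \<notin> set s \<Longrightarrow> takeWhile (\<lambda>c. c \<noteq> l) (s @ l # r) = s"
      by (induction s) auto
    ultimately show ?thesis using h(1) by simp
  qed
  have pw: "p = l # rev (takeWhile (\<lambda>c. c \<noteq> l) (rev u))"
    if h: "u = s @ morph \<sigma> v @ p" "p \<noteq> []" "prefix p (\<sigma> b)" for s v p b
  proof -
    obtain q where q: "p = l # q" "l \<notin> set q" using prefix_l[OF slp h(2,3)] by blast
    have "rev u = rev q @ l # rev (s @ morph \<sigma> v)" using h(1) q(1) by simp
    then have "takeWhile (\<lambda>c. c \<noteq> l) (rev u) = rev q" using q(2) tw_lemma[of l "rev q"] by simp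
    then show ?thesis using q(1) by simp
  qed
  have ss: "s' = s" using tw[OF u1] tw[OF u2] by simp
  have pp: "p' = p" using pw[OF u1(1,3,4)] pw[OF u2(1,3,4)] by simp
  have "morph \<sigma> v' = morph \<sigma> v" using u1(1) u2(1) ss pp by simp
  then have "v' = v" using inj unfolding injective_morphism_def by (simp add: inj_eq)
  then show ?thesis using ss pp by simp
qed



lemma factor_in_lang: "x \<in> X \<Longrightarrow> factor_at x i n \<in> lang X"
  unfolding lang_def by auto

lemma dec2:
  assumes ne: "\<forall>a. \<sigma> a \<noteq> []" and slp: "strongly_left_proper \<sigma> l"
    and xX: "x \<in> X" and bi: "is_bi_image \<sigma> x y" and u: "u = factor_at y i L" and lu: "l \<in> set u"
  shows "\<exists>j m s v p. v \<in> lang X \<and> (x (j-1), x m) \<in> ext_set X v \<and>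
     u = s @ morph \<sigma> v @ p \<and> strict_suffix s (\<sigma> (x (j-1))) \<and> p \<noteq> [] \<and> prefix p (\<sigma> (x m)) \<and>
     start_pos \<sigma> x (j-1) < i \<and>
     \<sigma> (x (j-1)) = factor_at y (start_pos \<sigma> x (j-1)) (nat (i - start_pos \<sigma> x (j-1))) @ s \<and>
     i + int L \<le> start_pos \<sigma> x (m+1) \<and>
     \<sigma> (x m) = p @ factor_at y (i + int L) (nat (start_pos \<sigma> x (m+1) - (i + int L)))"
proof -
  define sp where "sp = start_pos \<sigma> x"
  obtain j m where jm: "j \<le> m" "sp (j-1) < i" "i \<le> sp j" "sp m < i + int L" "i + int L \<le> sp (m+1)"
    and us: "u = factor_at y i (nat (sp j - i)) @ morph \<sigma> (factor_at x j (nat (m-j)))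
         @ factor_at y (sp m) (nat (i + int L - sp m))"
    and ba: "\<sigma> (x (j-1)) = factor_at y (sp (j-1)) (nat (i - sp (j-1)))
                   @ factor_at y i (nat (sp j - i))"
    and bb: "\<sigma> (x m) = factor_at y (sp m) (nat (i + int L - sp m))
                   @ factor_at y (i + int L) (nat (sp (m+1) - (i + int L)))"
    using dec[OF ne slp bi u lu] unfolding sp_def by blast
  define s where "s = factor_at y i (nat (sp j - i))"
  define v where "v = factor_at x j (nat (m-j))"
  define p where "p = factor_at y (sp m) (nat (i + int L - sp m))"
  have vl: "v \<in> lang X" unfolding v_def by (rule factor_in_lang[OF xX])
  have e1: "factor_at x (j-1) (1 + n') = [x (j-1)] @ factor_at x j n'" for n'
    using factor_append[of x "j-1" 1 n'] by simp
  have e2: "factor_at x j (nat (m-j) + 1) = v @ [x m]"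
    unfolding v_def using factor_append[of x j "nat (m-j)" 1] jm(1) by simp
  have "factor_at x (j-1) (1 + (nat (m-j) + 1)) = [x (j-1)] @ v @ [x m]"
    using e1[of "nat (m-j) + 1"] e2 by simp
  then have "x (j-1) # v @ [x m] \<in> lang X" using factor_in_lang[OF xX, of "j-1" "1 + (nat (m-j) + 1)"]
    by simp
  then have ext: "(x (j-1), x m) \<in> ext_set X v" by (simp add: ext_set_def)
  have ss: "strict_suffix s (\<sigma> (x (j-1)))"
    unfolding strict_suffix_def suffix_def using ba jm(2) s_def
    by (metis (no_types, lifting) append_self_conv2 factor_len length_0_conv zero_less_nat_eq diff_gt_0_iff_gt less_irrefl)
  have pne: "p \<noteq> []" unfolding p_def using jm(4)
    by (metis factor_len length_0_conv zero_less_nat_eq diff_gt_0_iff_gt less_irrefl)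
  have pp: "prefix p (\<sigma> (x m))" unfolding prefix_def p_def using bb by blast
  show ?thesis
    apply (rule exI[of _ j], rule exI[of _ m], rule exI[of _ s], rule exI[of _ v], rule exI[of _ p])
    using vl ext us ss pne pp jm ba bb unfolding s_def v_def p_def sp_def by blast
qed



lemma langY_elim:
  assumes "w \<in> lang (image_shift \<sigma> X)"
  obtains x y i where "x \<in> X" "is_bi_image \<sigma> x y" "w = factor_at y i (length w)"
proof -
  obtain y' i where y': "y' \<in> image_shift \<sigma> X" "w = factor_at y' i (length w)"
    using assms unfolding lang_def by blast
  then obtain x y k where "x \<in> X" "is_bi_image \<sigma> x y" "y' = (shift ^^ k) y"
    unfolding image_shift_def by blast
  then show ?thesis using that y'(2) by (simp add: factor_shift_pow)
qed

theorem proposition4p1: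
  fixes X :: "(int \<Rightarrow> 'a::finite) set"
    and \<sigma> :: "'a \<Rightarrow> 'b::finite list"
    and l :: 'b
    and u :: "'b list"
  assumes "shift_space X"
    and "non_erasing \<sigma>"
    and "injective_morphism \<sigma>"
    and "strongly_left_proper \<sigma> l"
    and "u \<noteq> []"
    and "u \<in> lang (image_shift \<sigma> X)"
  shows "(l \<notin> set u \<longrightarrow> (\<exists>b. \<exists>s p. s \<noteq> [] \<and> \<sigma> b = s @ u @ p))
       \<and> (l \<in> set u \<longrightarrow>
           (\<exists>s v p.
              (v \<in> lang X \<and> (\<exists>(a, b) \<in> ext_set X v.
                  u = s @ morph \<sigma> v @ p \<and> strict_suffix s (\<sigma> a) \<and>
                  p \<noteq> [] \<and> prefix p (\<sigma> b)))
            \<and> (\<forall>s' v' p'. (v' \<in> lang X \<and> (\<exists>(a, b) \<in> ext_set X v'.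
                  u = s' @ morph \<sigma> v' @ p' \<and> strict_suffix s' (\<sigma> a) \<and>
                  p' \<noteq> [] \<and> prefix p' (\<sigma> b))) \<longrightarrow> (s', v', p') = (s, v, p))
            \<and> ext_set (image_shift \<sigma> X) u =
                {(a', b'). \<exists>(a, b) \<in> ext_set X v.
                    (\<exists>w. \<sigma> a = w @ [a'] @ s) \<and> (\<exists>w. \<sigma> b @ [l] = p @ [b'] @ w)}))"
proof -
  have ne: "\<forall>a. \<sigma> a \<noteq> []" using assms(2) unfolding non_erasing_def by simp
  have slp: "strongly_left_proper \<sigma> l" by (rule assms(4))
  have inj: "injective_morphism \<sigma>" by (rule assms(3))
  obtain x y i where xX: "x \<in> X" and bi: "is_bi_image \<sigma> x y" and uf: "u = factor_at y i (length u)"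
    using langY_elim[OF assms(6)] by blast
  define L where "L = length u"
  define sp where "sp = start_pos \<sigma> x"
  have P1: "\<exists>b. \<exists>s p. s \<noteq> [] \<and> \<sigma> b = s @ u @ p" if nl: "l \<notin> set u"
  proof -
    obtain j0 where j0: "sp j0 \<le> i" "i < sp (j0+1)" using sp_block_ex[OF ne] sp_def by blast
    have lu: "u ! k = y (i + int k)" if "k < L" for k using uf that L_def by (metis factor_nth)
    have end_ok: "i + int L \<le> sp (j0+1)"
    proof (rule ccontr)
      assume "\<not> ?thesis"
      then have "nat (sp (j0+1) - i) < L" using j0 by linarith
      then have "u ! nat (sp (j0+1) - i) = y (sp (j0+1))" using lu j0 by simp
      also have "\<dots> = l" using bi_image_l[OF ne slp bi] sp_def by blast
      finally show False using nl \<open>nat (sp (j0+1) - i) < L\<close> L_def by (metis nth_mem)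
    qed
    have st: "sp j0 < i"
    proof (rule ccontr)
      assume "\<not> ?thesis"
      then have "i = sp j0" using j0 by simp
      have "0 < L" using assms(5) L_def by simp
      then have "u ! 0 = y i" using lu by simp
      also have "\<dots> = l" using bi_image_l[OF ne slp bi] sp_def \<open>i = sp j0\<close> by blast
      finally show False using nl \<open>0 < L\<close> L_def by (metis nth_mem)
    qed
    have len: "length (\<sigma> (x j0)) = nat (i - sp j0) + L + nat (sp (j0+1) - (i + int L))"
      using sp_succ[of \<sigma> x j0] sp_def st end_ok by simp
    have "\<sigma> (x j0) = factor_at y (sp j0) (nat (i - sp j0) + L + nat (sp (j0+1) - (i + int L)))"
      using factor_block[OF bi, of j0] len sp_def by simp
    also have "\<dots> = factor_at y (sp j0) (nat (i - sp j0)) @ u @ factor_at y (i + int L) (nat (sp (j0+1) - (i + int L)))"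
      using st uf L_def by (simp add: factor_append)
    finally have eq: "\<sigma> (x j0) = factor_at y (sp j0) (nat (i - sp j0)) @ u @ factor_at y (i + int L) (nat (sp (j0+1) - (i + int L)))" .
    have "factor_at y (sp j0) (nat (i - sp j0)) \<noteq> []" using st
      by (metis factor_len length_0_conv zero_less_nat_eq diff_gt_0_iff_gt less_irrefl)
    then show ?thesis using eq by blast
  qed
  have P2: "\<exists>s v p.
              (v \<in> lang X \<and> (\<exists>(a, b) \<in> ext_set X v.
                  u = s @ morph \<sigma> v @ p \<and> strict_suffix s (\<sigma> a) \<and>
                  p \<noteq> [] \<and> prefix p (\<sigma> b)))
            \<and> (\<forall>s' v' p'. (v' \<in> lang X \<and> (\<exists>(a, b) \<in> ext_set X v'.
                  u = s' @ morph \<sigma> v' @ p' \<and> strict_suffix s' (\<sigma> a) \<and>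
                  p' \<noteq> [] \<and> prefix p' (\<sigma> b))) \<longrightarrow> (s', v', p') = (s, v, p))
            \<and> ext_set (image_shift \<sigma> X) u =
                {(a', b'). \<exists>(a, b) \<in> ext_set X v.
                    (\<exists>w. \<sigma> a = w @ [a'] @ s) \<and> (\<exists>w. \<sigma> b @ [l] = p @ [b'] @ w)}"
    if lu: "l \<in> set u"
  proof -
    obtain j m s v p where vl: "v \<in> lang X" and ext: "(x (j-1), x m) \<in> ext_set X v"
      and us: "u = s @ morph \<sigma> v @ p" and ss: "strict_suffix s (\<sigma> (x (j-1)))"
      and pne: "p \<noteq> []" and pp: "prefix p (\<sigma> (x m))"
      using dec2[OF ne slp xX bi uf lu] by blast
    have C1: "v \<in> lang X \<and> (\<exists>(a, b) \<in> ext_set X v.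
                  u = s @ morph \<sigma> v @ p \<and> strict_suffix s (\<sigma> a) \<and>
                  p \<noteq> [] \<and> prefix p (\<sigma> b))"
      using vl ext us ss pne pp by blast
    have C2: "\<forall>s' v' p'. (v' \<in> lang X \<and> (\<exists>(a, b) \<in> ext_set X v'.
                  u = s' @ morph \<sigma> v' @ p' \<and> strict_suffix s' (\<sigma> a) \<and>
                  p' \<noteq> [] \<and> prefix p' (\<sigma> b))) \<longrightarrow> (s', v', p') = (s, v, p)"
    proof (intro allI impI)
      fix s' v' p'
      assume "v' \<in> lang X \<and> (\<exists>(a, b) \<in> ext_set X v'.
                  u = s' @ morph \<sigma> v' @ p' \<and> strict_suffix s' (\<sigma> a) \<and>
                  p' \<noteq> [] \<and> prefix p' (\<sigma> b))"
      then obtain a b where "u = s' @ morph \<sigma> v' @ p'" "strict_suffix s' (\<sigma> a)"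
                  "p' \<noteq> []" "prefix p' (\<sigma> b)" by blast
      then show "(s', v', p') = (s, v, p)"
        using decomp_unique[OF slp inj us ss pne pp] by simp
    qed
    have C3: "ext_set (image_shift \<sigma> X) u =
                {(a', b'). \<exists>(a, b) \<in> ext_set X v.
                    (\<exists>w. \<sigma> a = w @ [a'] @ s) \<and> (\<exists>w. \<sigma> b @ [l] = p @ [b'] @ w)}"
    proof (intro equalityI subsetI)
      fix ab' assume h: "ab' \<in> ext_set (image_shift \<sigma> X) u"
      obtain a' b' where ab'[simp]: "ab' = (a', b')" by (cases ab')
      have w: "a' # u @ [b'] \<in> lang (image_shift \<sigma> X)" using h by (simp add: ext_set_def)
      obtain x2 z i3 where x2X: "x2 \<in> X" and bi2: "is_bi_image \<sigma> x2 z"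
        and wf: "a' # u @ [b'] = factor_at z i3 (length (a' # u @ [b']))"
        using langY_elim[OF w] by blast
      have uf2: "u = factor_at z (i3 + 1) L"
        using factor_sub[of z i3 _ "[a']" u "[b']"] wf L_def by simp
      have a'z: "a' = z i3" using arg_cong[OF wf, of "\<lambda>w. w ! 0"] by simp
      have b'z: "b' = z (i3 + 1 + int L)"
      proof -
        have "(a' # u @ [b']) ! (L + 1) = b'" using L_def by (simp add: nth_append)
        moreover have "L + 1 < length (a' # u @ [b'])" using L_def by simp
        ultimately have "b' = z (i3 + int (L + 1))" using wf factor_nth by metis
        then show ?thesis by (simp add: add.assoc)
      qed
      define sp2 where "sp2 = start_pos \<sigma> x2"
      obtain j2 m2 s2 v2 p2 where ext2: "(x2 (j2-1), x2 m2) \<in> ext_set X v2"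
        and us2: "u = s2 @ morph \<sigma> v2 @ p2" and ss2: "strict_suffix s2 (\<sigma> (x2 (j2-1)))"
        and pne2: "p2 \<noteq> []" and pp2: "prefix p2 (\<sigma> (x2 m2))"
        and jlt: "sp2 (j2-1) < i3 + 1"
        and ba2: "\<sigma> (x2 (j2-1)) = factor_at z (sp2 (j2-1)) (nat (i3 + 1 - sp2 (j2-1))) @ s2"
        and mle: "i3 + 1 + int L \<le> sp2 (m2+1)"
        and bb2: "\<sigma> (x2 m2) = p2 @ factor_at z (i3 + 1 + int L) (nat (sp2 (m2+1) - (i3 + 1 + int L)))"
        using dec2[OF ne slp x2X bi2 uf2 lu] unfolding sp2_def by blast
      have eqs: "s2 = s \<and> v2 = v \<and> p2 = p"
        using decomp_unique[OF slp inj us ss pne pp us2 ss2 pne2 pp2] by simp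
      have A: "\<exists>w. \<sigma> (x2 (j2-1)) = w @ [a'] @ s"
      proof -
        have "nat (i3 + 1 - sp2 (j2-1)) = nat (i3 - sp2 (j2-1)) + 1" using jlt by simp
        moreover have "sp2 (j2-1) + int (nat (i3 - sp2 (j2-1))) = i3" using jlt by simp
        ultimately have "factor_at z (sp2 (j2-1)) (nat (i3 + 1 - sp2 (j2-1)))
            = factor_at z (sp2 (j2-1)) (nat (i3 - sp2 (j2-1))) @ [z i3]"
          using factor_append[of z "sp2 (j2-1)" "nat (i3 - sp2 (j2-1))" 1] by simp
        then show ?thesis using ba2 eqs a'z by auto
      qed
      have B: "\<exists>w. \<sigma> (x2 m2) @ [l] = p @ [b'] @ w"
      proof (cases "sp2 (m2+1) = i3 + 1 + int L")
        case True
        then have "b' = l" using b'z bi_image_l[OF ne slp bi2] sp2_def by metis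
        then show ?thesis using True bb2 eqs by simp
      next
        case False
        define n' where "n' = nat (sp2 (m2+1) - (i3 + 1 + int L)) - 1"
        have n': "nat (sp2 (m2+1) - (i3 + 1 + int L)) = 1 + n'" using mle False unfolding n'_def by linarith
        have "factor_at z (i3 + 1 + int L) (1 + n') = [b'] @ factor_at z (i3 + 1 + int L + 1) n'"
          using factor_append[of z "i3 + 1 + int L" 1 n'] b'z by simp
        then show ?thesis using bb2 eqs n' by auto
      qed
      show "ab' \<in> {(a', b'). \<exists>(a, b) \<in> ext_set X v.
                    (\<exists>w. \<sigma> a = w @ [a'] @ s) \<and> (\<exists>w. \<sigma> b @ [l] = p @ [b'] @ w)}"
        using ext2 eqs A B by auto
    next
      fix ab' assume h: "ab' \<in> {(a', b'). \<exists>(a, b) \<in> ext_set X v.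
                    (\<exists>w. \<sigma> a = w @ [a'] @ s) \<and> (\<exists>w. \<sigma> b @ [l] = p @ [b'] @ w)}"
      obtain a' b' where ab'[simp]: "ab' = (a', b')" by (cases ab')
      obtain a b wa wb where ab: "(a, b) \<in> ext_set X v" and wa: "\<sigma> a = wa @ [a'] @ s"
        and wb: "\<sigma> b @ [l] = p @ [b'] @ wb" using h by auto
      have "a # v @ [b] \<in> lang X" using ab by (simp add: ext_set_def)
      then obtain x0 i0 where x0X: "x0 \<in> X" and avb: "a # v @ [b] = factor_at x0 i0 (length (a # v @ [b]))"
        unfolding lang_def by blast
      obtain z where bi0: "is_bi_image \<sigma> x0 z" using bi_image_exists[OF ne] by blast
      have zY: "z \<in> image_shift \<sigma> X" unfolding image_shift_def
        using x0X bi0 ne by (intro CollectI exI[of _ x0] exI[of _ z] exI[of _ 0]) auto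
      define sp0 where "sp0 = start_pos \<sigma> x0"
      define n where "n = length (a # v @ [b])"
      define N where "N = nat (sp0 (i0 + int n) - sp0 i0)"
      have avb': "factor_at x0 i0 n = a # v @ [b]" unfolding n_def by (rule avb[symmetric])
      have fm: "factor_at z (sp0 i0) N = \<sigma> a @ morph \<sigma> v @ \<sigma> b"
        using factor_morph[OF bi0, of i0 n] avb' unfolding N_def sp0_def
        by (simp add: morph_def)
      have le: "sp0 i0 \<le> sp0 (i0 + int n)" using sp_le_iff[OF ne] sp0_def by simp
      have "sp0 i0 + int N = sp0 (i0 + int n)" using le N_def by simp
      then have zl: "z (sp0 i0 + int N) = l" using bi_image_l[OF ne slp bi0] sp0_def by blast
      have "factor_at z (sp0 i0) (N + 1) = \<sigma> a @ morph \<sigma> v @ \<sigma> b @ [l]"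
        using factor_append[of z "sp0 i0" N 1] fm zl by simp
      also have "\<dots> = wa @ (a' # u @ [b']) @ wb" using wa wb us by simp
      finally have "factor_at z (sp0 i0 + int (length wa)) (length (a' # u @ [b'])) = a' # u @ [b']"
        by (rule factor_sub)
      then have "a' # u @ [b'] \<in> lang (image_shift \<sigma> X)" unfolding lang_def
        using zY by (intro CollectI bexI[of _ z] exI[of _ "sp0 i0 + int (length wa)"]) (simp_all only: eq_commute)
      then show "ab' \<in> ext_set (image_shift \<sigma> X) u" by (simp add: ext_set_def)
    qed
    show ?thesis using C1 C2 C3 by blast
  qed
  show ?thesis using P1 P2 by blast
qed

end
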